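(* Let $V$ be a normal matrix ordered $*$-operator space, and for each $n$ let $d_{n,V}(A)=\inf\{\|A+P\|_{n,n}:P\in M_n(V)_+\}$ for $A\in M_n(V)_{sa}$. Then $(V,\{d_{n,V}\})$ is an $L^\infty$-matricially ordered space.
   Context: A $*$-vector space is a complex vector space with a conjugate-linear involution; $M_{n,m}(V)$ carries $(x_{ij})^*=(x_{ji}^* )$ and $M_n(V)_{sa}$ is its real subspace of self-adjoint elements. An operator space is a complex vector space with norms $\|\cdot\|_{n,m}$ on $M_{n,m}(V)$ satisfying $\|XAY\|\le\|X\|\|A\|\|Y\|$ for scalar matrices $X,Y$ and $\|A\oplus B\|=\max\{\|A\|,\|B\|\}$; a $*$-operator space additionally has $\|A^*\|_{m,n}=\|A\|_{n,m}$. It is matrix ordered if each $M_n(V)_+\subseteq M_n(V)_{sa}$ is a proper cone with $A\oplus B\in M_{n+k}(V)_+$ and $XBX^*\in M_l(V)_+$ whenever $A\in M_n(V)_+$, $B\in M_k(V)_+$, $X\in M_{l,k}$; it is normal if each $M_n(V)_+$ is norm closed and $A\le B\le C$ in $M_n(V)_{sa}$ implies $\|B\|\le\max\{\|A\|,\|C\|\}$. A gauge on a real vector space is a subadditive, positively homogeneous map into $[0,\infty)$; it is proper if $\nu(x)=\nu(-x)=0$ implies $x=0$. An $L^\infty$-matricially ordered space ($L^\infty$-MOS) is a $*$-vector space $V$ with proper gauges $\nu_n:M_n(V)_{sa}\to[0,\infty)$ such that (1) $\nu_k(X^*AX)\le\|X\|^2\nu_n(A)$ for $X\in M_{n,k}$,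 $A\in M_n(V)_{sa}$, and (2) $\nu_{n+k}(A\oplus B)=\max\{\nu_n(A),\nu_k(B)\}$ for $A\in M_n(V)_{sa}$, $B\in M_k(V)_{sa}$. *)

theory Defs
  imports Complex_Main "HOL-Library.Function_Algebras"
begin

text \<open>Matrices over V are modelled as functions nat => nat => 'v; an n x m matrix
is one vanishing outside the index box {0..<n} x {0..<m}. The complex vector space structure on V is given
explicitly by a scalar multiplication scal and the involution by star.\<close>

type_synonym 'v mat = "nat \<Rightarrow> nat \<Rightarrow> 'v"

definition mats :: "nat \<Rightarrow> nat \<Rightarrow> ('v::zero) mat set" where
  "mats n m = {A. \<forall>i j. (n \<le> i \<or> m \<le> j) \<longrightarrow> A i j = 0}"

definition star_vector_space ::
  "(complex \<Rightarrow> 'v::ab_group_add \<Rightarrow> 'v) \<Rightarrow> ('v \<Rightarrow> 'v) \<Rightarrow> bool" where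
  "star_vector_space scal star \<longleftrightarrow>
     (\<forall>a x y. scal a (x + y) = scal a x + scal a y) \<and>
     (\<forall>a b x. scal (a + b) x = scal a x + scal b x) \<and>
     (\<forall>a b x. scal a (scal b x) = scal (a * b) x) \<and>
     (\<forall>x. scal 1 x = x) \<and>
     (\<forall>x y. star (x + y) = star x + star y) \<and>
     (\<forall>a x. star (scal a x) = scal (cnj a) (star x)) \<and>
     (\<forall>x. star (star x) = x)"

definition mscal :: "(complex \<Rightarrow> 'v \<Rightarrow> 'v) \<Rightarrow> complex \<Rightarrow> 'v mat \<Rightarrow> 'v mat" where
  "mscal scal c A = (\<lambda>i j. scal c (A i j))"

definition mstar :: "('v \<Rightarrow> 'v) \<Rightarrow> 'v mat \<Rightarrow> 'v mat" where
  "mstar star A = (\<lambda>i j. star (A j i))"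

definition sa :: "('v::zero \<Rightarrow> 'v) \<Rightarrow> nat \<Rightarrow> 'v mat set" where
  "sa star n = {A \<in> mats n n. mstar star A = A}"

definition mprod :: "(complex \<Rightarrow> 'v::comm_monoid_add \<Rightarrow> 'v) \<Rightarrow> nat \<Rightarrow> nat \<Rightarrow>
    complex mat \<Rightarrow> 'v mat \<Rightarrow> complex mat \<Rightarrow> 'v mat" where
  "mprod scal n m X A Y = (\<lambda>i j. \<Sum>p<n. \<Sum>q<m. scal (X i p * Y q j) (A p q))"

definition ctrans :: "complex mat \<Rightarrow> complex mat" where
  "ctrans X = (\<lambda>i j. cnj (X j i))"

definition dsum :: "nat \<Rightarrow> nat \<Rightarrow> ('v::zero) mat \<Rightarrow> 'v mat \<Rightarrow> 'v mat" where
  "dsum n m A B = (\<lambda>i j. if i < n \<and> j < m then A i j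
                         else if n \<le> i \<and> m \<le> j then B (i - n) (j - m) else 0)"

definition vnorm :: "nat \<Rightarrow> (nat \<Rightarrow> complex) \<Rightarrow> real" where
  "vnorm n v = sqrt (\<Sum>i<n. (cmod (v i))\<^sup>2)"

definition mulv :: "nat \<Rightarrow> complex mat \<Rightarrow> (nat \<Rightarrow> complex) \<Rightarrow> (nat \<Rightarrow> complex)" where
  "mulv m X v = (\<lambda>i. \<Sum>j<m. X i j * v j)"

definition cnorm :: "nat \<Rightarrow> nat \<Rightarrow> complex mat \<Rightarrow> real" where
  "cnorm n m X = (SUP v\<in>{v. vnorm m v \<le> 1}. vnorm n (mulv m X v))"

definition is_norm_on ::
  "(complex \<Rightarrow> 'v::ab_group_add \<Rightarrow> 'v) \<Rightarrow> nat \<Rightarrow> nat \<Rightarrow> ('v mat \<Rightarrow> real) \<Rightarrow> bool" where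
  "is_norm_on scal n m N \<longleftrightarrow>
     (\<forall>A\<in>mats n m. 0 \<le> N A \<and> (N A = 0 \<longleftrightarrow> A = 0)) \<and>
     (\<forall>c. \<forall>A\<in>mats n m. N (mscal scal c A) = cmod c * N A) \<and>
     (\<forall>A\<in>mats n m. \<forall>B\<in>mats n m. N (A + B) \<le> N A + N B)"

definition star_operator_space ::
  "(complex \<Rightarrow> 'v::ab_group_add \<Rightarrow> 'v) \<Rightarrow> ('v \<Rightarrow> 'v) \<Rightarrow>
   (nat \<Rightarrow> nat \<Rightarrow> 'v mat \<Rightarrow> real) \<Rightarrow> bool" where
  "star_operator_space scal star nrm \<longleftrightarrow>
     star_vector_space scal star \<and>
     (\<forall>n m. 0 < n \<and> 0 < m \<longrightarrow> is_norm_on scal n m (nrm n m)) \<and>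
     (\<forall>l n m k X A Y. 0 < l \<and> 0 < n \<and> 0 < m \<and> 0 < k \<and>
        X \<in> mats l n \<and> A \<in> mats n m \<and> Y \<in> mats m k \<longrightarrow>
        nrm l k (mprod scal n m X A Y) \<le> cnorm l n X * nrm n m A * cnorm m k Y) \<and>
     (\<forall>n m k l A B. 0 < n \<and> 0 < m \<and> 0 < k \<and> 0 < l \<and>
        A \<in> mats n m \<and> B \<in> mats k l \<longrightarrow>
        nrm (n + k) (m + l) (dsum n m A B) = max (nrm n m A) (nrm k l B)) \<and>
     (\<forall>n m A. 0 < n \<and> 0 < m \<and> A \<in> mats n m \<longrightarrow>
        nrm m n (mstar star A) = nrm n m A)"

definition proper_cone :: "(complex \<Rightarrow> 'v::ab_group_add \<Rightarrow> 'v) \<Rightarrow> 'v mat set \<Rightarrow> bool" where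
  "proper_cone scal C \<longleftrightarrow>
     0 \<in> C \<and> (\<forall>A\<in>C. \<forall>B\<in>C. A + B \<in> C) \<and>
     (\<forall>t::real. \<forall>A\<in>C. 0 \<le> t \<longrightarrow> mscal scal (complex_of_real t) A \<in> C) \<and>
     (\<forall>A. A \<in> C \<and> - A \<in> C \<longrightarrow> A = 0)"

definition matrix_ordered ::
  "(complex \<Rightarrow> 'v::ab_group_add \<Rightarrow> 'v) \<Rightarrow> ('v \<Rightarrow> 'v) \<Rightarrow> (nat \<Rightarrow> 'v mat set) \<Rightarrow> bool" where
  "matrix_ordered scal star pos \<longleftrightarrow>
     (\<forall>n. 0 < n \<longrightarrow> pos n \<subseteq> sa star n \<and> proper_cone scal (pos n)) \<and>
     (\<forall>n k A B. 0 < n \<and> 0 < k \<and> A \<in> pos n \<and> B \<in> pos k \<longrightarrow>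
        dsum n n A B \<in> pos (n + k)) \<and>
     (\<forall>l k X B. 0 < l \<and> 0 < k \<and> X \<in> mats l k \<and> B \<in> pos k \<longrightarrow>
        mprod scal k k X B (ctrans X) \<in> pos l)"

definition normal_mo_star_opsp ::
  "(complex \<Rightarrow> 'v::ab_group_add \<Rightarrow> 'v) \<Rightarrow> ('v \<Rightarrow> 'v) \<Rightarrow>
   (nat \<Rightarrow> nat \<Rightarrow> 'v mat \<Rightarrow> real) \<Rightarrow> (nat \<Rightarrow> 'v mat set) \<Rightarrow> bool" where
  "normal_mo_star_opsp scal star nrm pos \<longleftrightarrow>
     star_operator_space scal star nrm \<and> matrix_ordered scal star pos \<and>
     (\<forall>n. 0 < n \<longrightarrow> (\<forall>S A. (\<forall>j. S j \<in> pos n) \<and> A \<in> mats n n \<and>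
          (\<lambda>j. nrm n n (S j - A)) \<longlonglongrightarrow> 0 \<longrightarrow> A \<in> pos n)) \<and>
     (\<forall>n A B C. 0 < n \<and> A \<in> sa star n \<and> B \<in> sa star n \<and> C \<in> sa star n \<and>
        B - A \<in> pos n \<and> C - B \<in> pos n \<longrightarrow>
        nrm n n B \<le> max (nrm n n A) (nrm n n C))"

definition d_V :: "(nat \<Rightarrow> nat \<Rightarrow> 'v::plus mat \<Rightarrow> real) \<Rightarrow> (nat \<Rightarrow> 'v mat set) \<Rightarrow>
    nat \<Rightarrow> 'v mat \<Rightarrow> real" where
  "d_V nrm pos n A = (INF P\<in>pos n. nrm n n (A + P))"

definition proper_gauge ::
  "(complex \<Rightarrow> 'v::ab_group_add \<Rightarrow> 'v) \<Rightarrow> 'v mat set \<Rightarrow> ('v mat \<Rightarrow> real) \<Rightarrow> bool" where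
  "proper_gauge scal S g \<longleftrightarrow>
     (\<forall>x\<in>S. 0 \<le> g x) \<and>
     (\<forall>x\<in>S. \<forall>y\<in>S. g (x + y) \<le> g x + g y) \<and>
     (\<forall>t::real. \<forall>x\<in>S. 0 < t \<longrightarrow> g (mscal scal (complex_of_real t) x) = t * g x) \<and>
     (\<forall>x\<in>S. g x = 0 \<and> g (- x) = 0 \<longrightarrow> x = 0)"

definition Linf_MOS ::
  "(complex \<Rightarrow> 'v::ab_group_add \<Rightarrow> 'v) \<Rightarrow> ('v \<Rightarrow> 'v) \<Rightarrow> (nat \<Rightarrow> 'v mat \<Rightarrow> real) \<Rightarrow> bool" where
  "Linf_MOS scal star \<nu> \<longleftrightarrow>
     star_vector_space scal star \<and>
     (\<forall>n. 0 < n \<longrightarrow> proper_gauge scal (sa star n) (\<nu> n)) \<and>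
     (\<forall>n k X A. 0 < n \<and> 0 < k \<and> X \<in> mats n k \<and> A \<in> sa star n \<longrightarrow>
        \<nu> k (mprod scal n n (ctrans X) A X) \<le> (cnorm n k X)\<^sup>2 * \<nu> n A) \<and>
     (\<forall>n k A B. 0 < n \<and> 0 < k \<and> A \<in> sa star n \<and> B \<in> sa star k \<longrightarrow>
        \<nu> (n + k) (dsum n n A B) = max (\<nu> n A) (\<nu> k B))"

end

theory Submission imports Defs "HOL-Analysis.L2_Norm" begin

lemma vnorm_L2: "vnorm n v = L2_set (\<lambda>i. cmod (v i)) {..<n}"
  by (simp add: vnorm_def L2_set_def)

lemma vnorm_nonneg: "0 \<le> vnorm n v" by (simp add: vnorm_def sum_nonneg)

lemma vnorm_scale: "vnorm n (\<lambda>i. c * v i) = cmod c * vnorm n v"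
proof -
  have "(\<Sum>i<n. (cmod (c * v i))\<^sup>2) = (cmod c)\<^sup>2 * (\<Sum>i<n. (cmod (v i))\<^sup>2)"
    by (simp add: norm_mult power_mult_distrib sum_distrib_left)
  then show ?thesis by (simp add: vnorm_def real_sqrt_mult)
qed

lemma mulv_scale: "mulv m X (\<lambda>i. c * v i) = (\<lambda>i. c * mulv m X v i)"
  by (simp add: mulv_def sum_distrib_left algebra_simps)

lemma vnorm_le_sum: "vnorm n v \<le> (\<Sum>i<n. cmod (v i))"
  unfolding vnorm_L2 by (rule L2_set_le_sum) auto

lemma cmod_le_vnorm: "j < n \<Longrightarrow> cmod (v j) \<le> vnorm n v"
  unfolding vnorm_L2 by (rule member_le_L2_set) auto

lemma cnorm_bdd: "bdd_above ((\<lambda>v. vnorm n (mulv k X v)) ` {v. vnorm k v \<le> 1})"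
proof (rule bdd_aboveI2)
  fix v assume "v \<in> {v. vnorm k v \<le> 1}"
  hence v1: "vnorm k v \<le> 1" by simp
  have "vnorm n (mulv k X v) \<le> (\<Sum>i<n. cmod (mulv k X v i))" by (rule vnorm_le_sum)
  also have "\<dots> \<le> (\<Sum>i<n. \<Sum>j<k. cmod (X i j))"
  proof (rule sum_mono)
    fix i
    have "cmod (mulv k X v i) \<le> (\<Sum>j<k. cmod (X i j * v j))"
      unfolding mulv_def by (rule norm_sum)
    also have "\<dots> \<le> (\<Sum>j<k. cmod (X i j))"
    proof (rule sum_mono)
      fix j assume "j \<in> {..<k}"
      hence "cmod (v j) \<le> 1" using cmod_le_vnorm[of j k v] v1 by auto
      thus "cmod (X i j * v j) \<le> cmod (X i j)"
        by (simp add: norm_mult mult_left_le)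
    qed
    finally show "cmod (mulv k X v i) \<le> (\<Sum>j<k. cmod (X i j))" .
  qed
  finally show "vnorm n (mulv k X v) \<le> (\<Sum>i<n. \<Sum>j<k. cmod (X i j))" .
qed

lemma cnorm_upper: "vnorm k v \<le> 1 \<Longrightarrow> vnorm n (mulv k X v) \<le> cnorm n k X"
  unfolding cnorm_def by (rule cSUP_upper[OF _ cnorm_bdd]) auto

lemma vnorm_zero: "vnorm n (\<lambda>i. 0) = 0" by (simp add: vnorm_def)

lemma cnorm_nonneg: "0 \<le> cnorm n k X"
proof -
  have "vnorm n (mulv k X (\<lambda>i. 0)) \<le> cnorm n k X"
    by (rule cnorm_upper) (simp add: vnorm_zero)
  moreover have "mulv k X (\<lambda>i. 0) = (\<lambda>i. 0)" by (simp add: mulv_def)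
  ultimately show ?thesis by (simp add: vnorm_zero)
qed

lemma cnorm_least: "(\<And>v. vnorm k v \<le> 1 \<Longrightarrow> vnorm n (mulv k X v) \<le> c) \<Longrightarrow> cnorm n k X \<le> c"
  unfolding cnorm_def by (rule cSUP_least) (auto intro: exI[of _ "\<lambda>i. 0"] simp: vnorm_zero)

lemma cnorm_scaled: "vnorm n (mulv k X v) \<le> cnorm n k X * vnorm k v"
proof (cases "vnorm k v = 0")
  case True
  hence "\<forall>j\<in>{..<k}. cmod (v j) = 0" unfolding vnorm_L2 by (subst (asm) L2_set_eq_0_iff) auto
  hence "mulv k X v = (\<lambda>i. 0)" by (auto simp: mulv_def fun_eq_iff)
  thus ?thesis by (simp add: vnorm_zero True)
next
  case False
  hence pos: "vnorm k v > 0" using vnorm_nonneg[of k v] by linarith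
  define c where "c = complex_of_real (1 / vnorm k v)"
  have "vnorm k (\<lambda>i. c * v i) = 1" unfolding vnorm_scale c_def norm_of_real using pos by simp
  hence "vnorm n (mulv k X (\<lambda>i. c * v i)) \<le> cnorm n k X" by (intro cnorm_upper) simp
  hence "(1 / vnorm k v) * vnorm n (mulv k X v) \<le> cnorm n k X"
    unfolding mulv_scale vnorm_scale c_def norm_of_real using pos by simp
  thus ?thesis using pos by (simp add: field_simps)
qed

lemma cnorm_ctrans: "cnorm k n (ctrans X) \<le> cnorm n k X"
proof (rule cnorm_least)
  fix v assume v1: "vnorm n v \<le> 1"
  define w where "w = mulv n (ctrans X) v"
  define C where "C = cnorm n k X"
  have "complex_of_real ((vnorm k w)\<^sup>2) = (\<Sum>j<k. cnj (w j) * w j)"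
  proof -
    have "(vnorm k w)\<^sup>2 = (\<Sum>j<k. (cmod (w j))\<^sup>2)"
      unfolding vnorm_def by (rule real_sqrt_pow2) (simp add: sum_nonneg)
    thus ?thesis by (simp add: complex_norm_square mult.commute del: of_real_power)
  qed
  also have "\<dots> = (\<Sum>j<k. \<Sum>i<n. cnj (w j) * (cnj (X i j) * v i))"
    by (simp add: w_def mulv_def ctrans_def sum_distrib_left)
  also have "\<dots> = (\<Sum>i<n. v i * cnj (mulv k X w i))"
    by (subst sum.swap) (simp add: mulv_def sum_distrib_left mult_ac)
  finally have eq: "complex_of_real ((vnorm k w)\<^sup>2) = (\<Sum>i<n. v i * cnj (mulv k X w i))" .
  have "(vnorm k w)\<^sup>2 = cmod (complex_of_real ((vnorm k w)\<^sup>2))"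
    by (simp only: norm_of_real) simp
  also have "\<dots> \<le> (\<Sum>i<n. \<bar>cmod (v i)\<bar> * \<bar>cmod (mulv k X w i)\<bar>)"
    unfolding eq by (rule order_trans[OF norm_sum]) (simp add: norm_mult)
  also have "\<dots> \<le> vnorm n v * vnorm n (mulv k X w)"
    unfolding vnorm_L2 by (rule L2_set_mult_ineq)
  also have "\<dots> \<le> 1 * (C * vnorm k w)"
    by (rule mult_mono[OF v1 cnorm_scaled[of n k X w, folded C_def]]) (auto simp: vnorm_nonneg)
  finally have sq: "(vnorm k w)\<^sup>2 \<le> C * vnorm k w" by simp
  have C0: "0 \<le> C" by (simp add: C_def cnorm_nonneg)
  show "vnorm k (mulv n (ctrans X) v) \<le> cnorm n k X"
  proof (cases "vnorm k w = 0")
    case True thus ?thesis using C0 by (simp add: w_def C_def)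
  next
    case False
    hence "vnorm k w > 0" using vnorm_nonneg[of k w] by linarith
    with sq have "vnorm k w \<le> C" by (simp add: power2_eq_square)
    thus ?thesis by (simp add: w_def C_def)
  qed
qed

definition sel :: "nat \<Rightarrow> (nat \<Rightarrow> nat) \<Rightarrow> complex mat" where
  "sel m f = (\<lambda>q j. if j < m \<and> q = f j then 1 else 0)"

lemma cnorm_sel:
  assumes inj: "inj_on f {..<m}" and img: "f ` {..<m} \<subseteq> {..<N}"
  shows "cnorm N m (sel m f) \<le> 1"
proof (rule cnorm_least)
  fix v assume v1: "vnorm m v \<le> 1"
  define g where "g i = (cmod (mulv m (sel m f) v i))\<^sup>2" for i
  have gf: "g (f j) = (cmod (v j))\<^sup>2" if "j < m" for j
  proof -
    have "mulv m (sel m f) v (f j) = (\<Sum>j'<m. if j' = j then v j' else 0)"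
      unfolding mulv_def sel_def
      by (rule sum.cong) (use inj that in \<open>auto dest: inj_onD\<close>)
    also have "\<dots> = v j" using that by simp
    finally show ?thesis by (simp add: g_def)
  qed
  have g0: "g i = 0" if "i \<notin> f ` {..<m}" for i
  proof -
    have "mulv m (sel m f) v i = 0"
      unfolding mulv_def sel_def by (rule sum.neutral) (use that in auto)
    thus ?thesis by (simp add: g_def)
  qed
  have "(\<Sum>i<N. g i) = (\<Sum>i\<in>f ` {..<m}. g i)"
    by (rule sum.mono_neutral_right) (use img g0 in auto)
  also have "\<dots> = (\<Sum>j<m. g (f j))" by (rule sum.reindex[OF inj, unfolded comp_def])
  also have "\<dots> = (\<Sum>j<m. (cmod (v j))\<^sup>2)" by (rule sum.cong) (auto simp: gf)
  finally have "vnorm N (mulv m (sel m f) v) = vnorm m v"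
    by (simp add: vnorm_def g_def)
  thus "vnorm N (mulv m (sel m f) v) \<le> 1" using v1 by simp
qed

lemma ctrans_ctrans[simp]: "ctrans (ctrans X) = X"
  by (simp add: ctrans_def)

lemma ctrans_mats: "X \<in> mats n k \<Longrightarrow> ctrans X \<in> mats k n"
  by (auto simp: mats_def ctrans_def)

lemma sel_mats: "\<forall>j<m. f j < N \<Longrightarrow> sel m f \<in> mats N m"
  by (auto simp: mats_def sel_def)

locale NM =
  fixes scal :: "complex \<Rightarrow> 'v::ab_group_add \<Rightarrow> 'v"
    and star :: "'v \<Rightarrow> 'v"
    and nrm :: "nat \<Rightarrow> nat \<Rightarrow> 'v mat \<Rightarrow> real"
    and pos :: "nat \<Rightarrow> 'v mat set"
  assumes NMA: "normal_mo_star_opsp scal star nrm pos"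
begin

lemma svs: "star_vector_space scal star"
  using NMA by (simp add: normal_mo_star_opsp_def star_operator_space_def)

lemma scal_add_r: "scal a (x + y) = scal a x + scal a y"
  using svs by (simp add: star_vector_space_def)
lemma scal_add_l: "scal (a + b) x = scal a x + scal b x"
  using svs by (simp add: star_vector_space_def)
lemma scal_assoc: "scal a (scal b x) = scal (a * b) x"
  using svs by (simp add: star_vector_space_def)
lemma scal_one: "scal 1 x = x"
  using svs by (simp add: star_vector_space_def)
lemma scal_zero_r: "scal a 0 = 0"
  using scal_add_r[of a 0 0] by simp
lemma scal_zero_l: "scal 0 x = 0"
  using scal_add_l[of 0 0 x] by simp

lemma opsp: "star_operator_space scal star nrm"
  using NMA by (simp add: normal_mo_star_opsp_def)
lemma mo: "matrix_ordered scal star pos"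
  using NMA by (simp add: normal_mo_star_opsp_def)

lemma nrm_nonneg: "0 < n \<Longrightarrow> 0 < m \<Longrightarrow> A \<in> mats n m \<Longrightarrow> 0 \<le> nrm n m A"
  using opsp by (auto simp: star_operator_space_def is_norm_on_def)
lemma nrm_zero_iff: "0 < n \<Longrightarrow> 0 < m \<Longrightarrow> A \<in> mats n m \<Longrightarrow> nrm n m A = 0 \<longleftrightarrow> A = 0"
  using opsp by (auto simp: star_operator_space_def is_norm_on_def)
lemma nrm_scal: "0 < n \<Longrightarrow> 0 < m \<Longrightarrow> A \<in> mats n m \<Longrightarrow> nrm n m (mscal scal c A) = cmod c * nrm n m A"
  using opsp by (auto simp: star_operator_space_def is_norm_on_def)
lemma nrm_add: "0 < n \<Longrightarrow> 0 < m \<Longrightarrow> A \<in> mats n m \<Longrightarrow> B \<in> mats n m \<Longrightarrow> nrm n m (A + B) \<le> nrm n m A + nrm n m B"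
  using opsp by (auto simp: star_operator_space_def is_norm_on_def)
lemma nrm_mprod: "0 < l \<Longrightarrow> 0 < n \<Longrightarrow> 0 < m \<Longrightarrow> 0 < k \<Longrightarrow>
        X \<in> mats l n \<Longrightarrow> A \<in> mats n m \<Longrightarrow> Y \<in> mats m k \<Longrightarrow>
        nrm l k (mprod scal n m X A Y) \<le> cnorm l n X * nrm n m A * cnorm m k Y"
  using conjunct1[OF conjunct2[OF conjunct2[OF opsp[unfolded star_operator_space_def]]], rule_format, of l n m k X A Y]
  by simp
lemma nrm_dsum: "0 < n \<Longrightarrow> 0 < m \<Longrightarrow> 0 < k \<Longrightarrow> 0 < l \<Longrightarrow>
        A \<in> mats n m \<Longrightarrow> B \<in> mats k l \<Longrightarrow>
        nrm (n + k) (m + l) (dsum n m A B) = max (nrm n m A) (nrm k l B)"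
  using conjunct1[OF conjunct2[OF conjunct2[OF conjunct2[OF opsp[unfolded star_operator_space_def]]]], rule_format, of n m k l A B]
  by simp

lemma pos_sa: "0 < n \<Longrightarrow> P \<in> pos n \<Longrightarrow> P \<in> sa star n"
  using mo by (auto simp: matrix_ordered_def)
lemma pos_mats: "0 < n \<Longrightarrow> P \<in> pos n \<Longrightarrow> P \<in> mats n n"
  using pos_sa by (auto simp: sa_def)
lemma pos_cone: "0 < n \<Longrightarrow> proper_cone scal (pos n)"
  using mo by (auto simp: matrix_ordered_def)
lemma pos_zero: "0 < n \<Longrightarrow> 0 \<in> pos n"
  using pos_cone by (auto simp: proper_cone_def)
lemma pos_addI: "0 < n \<Longrightarrow> P \<in> pos n \<Longrightarrow> Q \<in> pos n \<Longrightarrow> P + Q \<in> pos n"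
  using pos_cone by (auto simp: proper_cone_def)
lemma pos_scalI: "0 < n \<Longrightarrow> P \<in> pos n \<Longrightarrow> 0 \<le> t \<Longrightarrow> mscal scal (complex_of_real t) P \<in> pos n"
  using pos_cone by (auto simp: proper_cone_def)
lemma pos_antisym: "0 < n \<Longrightarrow> P \<in> pos n \<Longrightarrow> - P \<in> pos n \<Longrightarrow> P = 0"
  using pos_cone by (auto simp: proper_cone_def)
lemma pos_dsum: "0 < n \<Longrightarrow> 0 < k \<Longrightarrow> A \<in> pos n \<Longrightarrow> B \<in> pos k \<Longrightarrow> dsum n n A B \<in> pos (n + k)"
  using mo by (auto simp: matrix_ordered_def)
lemma pos_conj: "0 < l \<Longrightarrow> 0 < k \<Longrightarrow> X \<in> mats l k \<Longrightarrow> B \<in> pos k \<Longrightarrow> mprod scal k k X B (ctrans X) \<in> pos l"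
  using mo by (auto simp: matrix_ordered_def)
lemma pos_closed: "0 < n \<Longrightarrow> (\<And>j. S j \<in> pos n) \<Longrightarrow> A \<in> mats n n \<Longrightarrow>
          (\<lambda>j. nrm n n (S j - A)) \<longlonglongrightarrow> 0 \<Longrightarrow> A \<in> pos n"
  using conjunct1[OF conjunct2[OF conjunct2[OF NMA[unfolded normal_mo_star_opsp_def]]], rule_format, of n S A]
  by simp

lemma mats_add: "(A::'v mat) \<in> mats n m \<Longrightarrow> B \<in> mats n m \<Longrightarrow> A + B \<in> mats n m"
  by (simp add: mats_def)
lemma mats_uminus: "(A::'v mat) \<in> mats n m \<Longrightarrow> - A \<in> mats n m"
  by (simp add: mats_def)
lemma mats_mscal: "(A::'v mat) \<in> mats n m \<Longrightarrow> mscal scal c A \<in> mats n m"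
  by (simp add: mats_def mscal_def scal_zero_r)

lemma mscal_add: "mscal scal c (A + B) = mscal scal c A + mscal scal c B"
  by (simp add: mscal_def fun_eq_iff scal_add_r)
lemma mscal_mscal: "mscal scal a (mscal scal b A) = mscal scal (a * b) A"
  by (simp add: mscal_def scal_assoc)
lemma mscal_one: "mscal scal 1 A = A"
  by (simp add: mscal_def scal_one)

lemma mprod_add: "mprod scal n m X (A + B) Y = mprod scal n m X A Y + mprod scal n m X B Y"
  by (simp add: mprod_def fun_eq_iff scal_add_r sum.distrib)

lemma mprod_mats: "X \<in> mats l n \<Longrightarrow> Y \<in> mats m k \<Longrightarrow> mprod scal n m X A Y \<in> mats l k"
  by (auto simp: mats_def mprod_def scal_zero_l)

lemma mprod_sel:
  assumes "\<And>j. j < m \<Longrightarrow> f j < N"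
  shows "mprod scal N N (ctrans (sel m f)) M (sel m f) = (\<lambda>i j. if i < m \<and> j < m then M (f i) (f j) else 0)"
proof (intro ext)
  fix i j
  show "mprod scal N N (ctrans (sel m f)) M (sel m f) i j = (if i < m \<and> j < m then M (f i) (f j) else 0)"
  proof (cases "i < m \<and> j < m")
    case True
    have "\<And>p q. scal (ctrans (sel m f) i p * sel m f q j) (M p q) = (if p = f i then (if q = f j then M p q else 0) else 0)"
      using True by (auto simp: ctrans_def sel_def scal_one scal_zero_l)
    hence "mprod scal N N (ctrans (sel m f)) M (sel m f) i j = (\<Sum>p<N. \<Sum>q<N. if p = f i then (if q = f j then M p q else 0) else 0)"
      unfolding mprod_def by (simp only:)
    also have "\<dots> = (\<Sum>p<N. if p = f i then M p (f j) else 0)"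
      using True assms by (intro sum.cong) auto
    also have "\<dots> = M (f i) (f j)" using True assms by simp
    finally show ?thesis using True by simp
  next
    case False
    have "\<And>p q. scal (ctrans (sel m f) i p * sel m f q j) (M p q) = 0"
      using False by (auto simp: ctrans_def sel_def scal_zero_l)
    thus ?thesis using False by (auto simp: mprod_def)
  qed
qed


abbreviation "d \<equiv> d_V nrm pos"

lemma mats_add_pos: "0 < n \<Longrightarrow> (A::'v mat) \<in> mats n n \<Longrightarrow> P \<in> pos n \<Longrightarrow> A + P \<in> mats n n"
  by (rule mats_add) (auto intro: pos_mats)

lemma nrm_add_pos_nonneg: "0 < n \<Longrightarrow> (A::'v mat) \<in> mats n n \<Longrightarrow> P \<in> pos n \<Longrightarrow> 0 \<le> nrm n n (A + P)"
  by (rule nrm_nonneg) (auto intro: mats_add_pos)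

lemma d_bdd: "0 < n \<Longrightarrow> (A::'v mat) \<in> mats n n \<Longrightarrow> bdd_below ((\<lambda>P. nrm n n (A + P)) ` pos n)"
  by (rule bdd_belowI2[of _ 0]) (auto intro: nrm_add_pos_nonneg)

lemma d_le: "0 < n \<Longrightarrow> A \<in> mats n n \<Longrightarrow> P \<in> pos n \<Longrightarrow> d n A \<le> nrm n n (A + P)"
  unfolding d_V_def by (rule cINF_lower[OF d_bdd])

lemma d_ge: "0 < n \<Longrightarrow> (\<And>P. P \<in> pos n \<Longrightarrow> c \<le> nrm n n (A + P)) \<Longrightarrow> c \<le> d n A"
  unfolding d_V_def by (rule cINF_greatest) (auto intro: pos_zero)

lemma d_nonneg: "0 < n \<Longrightarrow> (A::'v mat) \<in> mats n n \<Longrightarrow> 0 \<le> d n A"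
  by (rule d_ge) (auto intro: nrm_add_pos_nonneg)

lemma d_approx:
  assumes "0 < n" "(A::'v mat) \<in> mats n n" "0 < e"
  shows "\<exists>P\<in>pos n. nrm n n (A + P) < d n A + e"
proof (rule ccontr)
  assume "\<not> ?thesis"
  hence "d n A + e \<le> d n A" by (intro d_ge[OF assms(1)]) (auto simp: not_less)
  thus False using assms by simp
qed

lemma d_subadd:
  assumes n: "0 < n" and x: "(x::'v mat) \<in> mats n n" and y: "y \<in> mats n n"
  shows "d n (x + y) \<le> d n x + d n y"
proof (rule field_le_epsilon)
  fix e :: real assume e: "0 < e"
  obtain P where P: "P \<in> pos n" "nrm n n (x + P) < d n x + e/2" using d_approx[OF n x, of "e/2"] e by auto
  obtain Q where Q: "Q \<in> pos n" "nrm n n (y + Q) < d n y + e/2" using d_approx[OF n y, of "e/2"] e by auto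
  have "d n (x + y) \<le> nrm n n (x + y + (P + Q))"
    by (rule d_le) (auto intro: n mats_add x y pos_addI P Q)
  also have "x + y + (P + Q) = (x + P) + (y + Q)" by (simp add: algebra_simps)
  also have "nrm n n \<dots> \<le> nrm n n (x + P) + nrm n n (y + Q)"
    by (rule nrm_add) (auto intro: n mats_add x y pos_mats P Q)
  finally have "d n (x + y) \<le> nrm n n (x + P) + nrm n n (y + Q)" .
  thus "d n (x + y) \<le> d n x + d n y + e" using P Q by linarith
qed

lemma d_scal_le:
  assumes n: "0 < n" and x: "(x::'v mat) \<in> mats n n" and t: "0 < t"
  shows "d n (mscal scal (complex_of_real t) x) \<le> t * d n x"
proof -
  have "d n (mscal scal (complex_of_real t) x) / t \<le> d n x"
  proof (rule d_ge[OF n])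
    fix P assume P: "P \<in> pos n"
    have "d n (mscal scal (complex_of_real t) x) \<le> nrm n n (mscal scal (complex_of_real t) x + mscal scal (complex_of_real t) P)"
      by (rule d_le) (auto intro: n mats_mscal x pos_scalI P t less_imp_le)
    also have "\<dots> = nrm n n (mscal scal (complex_of_real t) (x + P))" by (simp add: mscal_add)
    also have "\<dots> = t * nrm n n (x + P)"
      using t by (subst nrm_scal) (auto intro: n mats_add x pos_mats P)
    finally show "d n (mscal scal (complex_of_real t) x) / t \<le> nrm n n (x + P)"
      using t by (simp add: field_simps)
  qed
  thus ?thesis using t by (simp add: field_simps)
qed

lemma d_scal:
  assumes n: "0 < n" and x: "(x::'v mat) \<in> mats n n" and t: "0 < t"
  shows "d n (mscal scal (complex_of_real t) x) = t * d n x"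
proof (rule antisym[OF d_scal_le[OF n x t]])
  have "d n x = d n (mscal scal (complex_of_real (1/t)) (mscal scal (complex_of_real t) x))"
    using t by (simp add: mscal_mscal mscal_one flip: of_real_mult)
  also have "\<dots> \<le> (1/t) * d n (mscal scal (complex_of_real t) x)"
    by (rule d_scal_le) (auto intro: n mats_mscal x t)
  finally show "t * d n x \<le> d n (mscal scal (complex_of_real t) x)"
    using t by (simp add: field_simps)
qed

lemma d_zero_pos:
  assumes n: "0 < n" and x: "(x::'v mat) \<in> mats n n" and d0: "d n x = 0"
  shows "- x \<in> pos n"
proof -
  have "\<forall>j. \<exists>P. P \<in> pos n \<and> nrm n n (x + P) < d n x + 1 / real (Suc j)"
    using d_approx[OF n x] by (meson of_nat_0_less_iff zero_less_Suc divide_pos_pos zero_less_one)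
  then obtain S where S: "\<And>j. S j \<in> pos n" "\<And>j. nrm n n (x + S j) < 1 / real (Suc j)"
    using d0 by (metis choice add_0)
  show ?thesis
  proof (rule pos_closed[OF n S(1) mats_uminus[OF x]])
    have eq: "\<And>j. S j - - x = x + S j" by (simp add: algebra_simps)
    have "(\<lambda>j. nrm n n (x + S j)) \<longlonglongrightarrow> 0"
    proof (rule tendsto_sandwich[of "\<lambda>_. 0" _ _ "\<lambda>j. 1 / real (Suc j)"])
      show "\<forall>\<^sub>F j in sequentially. 0 \<le> nrm n n (x + S j)"
        by (rule always_eventually) (auto intro: nrm_add_pos_nonneg x S n)
      show "\<forall>\<^sub>F j in sequentially. nrm n n (x + S j) \<le> 1 / real (Suc j)"
        by (rule always_eventually) (use S(2) in \<open>auto intro: less_imp_le\<close>)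
      show "(\<lambda>j. 1 / real (Suc j)) \<longlonglongrightarrow> 0" by (rule LIMSEQ_Suc[OF lim_const_over_n])
    qed simp
    thus "(\<lambda>j. nrm n n (S j - - x)) \<longlonglongrightarrow> 0" by (simp only: eq)
  qed
qed

lemma d_proper:
  assumes n: "0 < n" and x: "(x::'v mat) \<in> mats n n" and "d n x = 0" "d n (- x) = 0"
  shows "x = 0"
proof -
  have "- x \<in> pos n" by (rule d_zero_pos) (use assms in auto)
  moreover have "- (- x) \<in> pos n" by (rule d_zero_pos) (use assms mats_uminus in auto)
  ultimately show ?thesis using pos_antisym[OF n] by (metis minus_equation_iff)
qed


lemma d_conj:
  assumes n: "0 < n" and k: "0 < k" and X: "X \<in> mats n k" and A: "(A::'v mat) \<in> mats n n"
  shows "d k (mprod scal n n (ctrans X) A X) \<le> (cnorm n k X)\<^sup>2 * d n A"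
proof -
  define c where "c = cnorm n k X"
  have c0: "0 \<le> c" by (simp add: c_def cnorm_nonneg)
  have Xt: "ctrans X \<in> mats k n" by (rule ctrans_mats[OF X])
  have Bm: "mprod scal n n (ctrans X) A X \<in> mats k k" by (rule mprod_mats[OF Xt X])
  have key: "d k (mprod scal n n (ctrans X) A X) \<le> c\<^sup>2 * nrm n n (A + P)" if P: "P \<in> pos n" for P
  proof -
    have Q: "mprod scal n n (ctrans X) P X \<in> pos k"
      using pos_conj[OF k n Xt P] by simp
    have "d k (mprod scal n n (ctrans X) A X) \<le> nrm k k (mprod scal n n (ctrans X) A X + mprod scal n n (ctrans X) P X)"
      by (rule d_le[OF k Bm Q])
    also have "\<dots> = nrm k k (mprod scal n n (ctrans X) (A + P) X)" by (simp add: mprod_add)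
    also have "\<dots> \<le> cnorm k n (ctrans X) * nrm n n (A + P) * cnorm n k X"
      by (rule nrm_mprod[OF k n n k Xt mats_add_pos[OF n A P] X])
    also have "\<dots> \<le> c * nrm n n (A + P) * c"
      unfolding c_def using nrm_add_pos_nonneg[OF n A P] cnorm_nonneg[of n k X]
      by (intro mult_right_mono) (auto simp: cnorm_ctrans)
    finally show ?thesis by (simp add: power2_eq_square mult_ac)
  qed
  show ?thesis
  proof (cases "c = 0")
    case True
    thus ?thesis using key[OF pos_zero[OF n]] by (simp add: c_def)
  next
    case False
    hence cp: "0 < c\<^sup>2" using c0 by simp
    have "d k (mprod scal n n (ctrans X) A X) / c\<^sup>2 \<le> d n A"
      by (rule d_ge[OF n]) (use key cp in \<open>auto simp: field_simps\<close>)
    thus ?thesis using cp by (simp add: field_simps c_def)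
  qed
qed

lemma compress:
  assumes m: "0 < m" and N: "0 < N" and inj: "inj_on f {..<m}" and fN: "\<forall>j<m. f j < N"
    and M: "(M::'v mat) \<in> mats N N" and R: "R \<in> pos N"
  shows "d m (mprod scal N N (ctrans (sel m f)) M (sel m f)) \<le> nrm N N (M + R)"
proof -
  define S where "S = sel m f"
  have Sm: "S \<in> mats N m" unfolding S_def by (rule sel_mats[OF fN])
  have St: "ctrans S \<in> mats m N" by (rule ctrans_mats[OF Sm])
  have c1: "cnorm N m S \<le> 1" unfolding S_def by (rule cnorm_sel[OF inj]) (use fN in auto)
  have c2: "cnorm m N (ctrans S) \<le> 1" using cnorm_ctrans[of m N S] c1 by simp
  have Q: "mprod scal N N (ctrans S) R S \<in> pos m"
    using pos_conj[OF m N St R] by simp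
  have Cm: "mprod scal N N (ctrans S) M S \<in> mats m m" by (rule mprod_mats[OF St Sm])
  have "d m (mprod scal N N (ctrans S) M S) \<le> nrm m m (mprod scal N N (ctrans S) M S + mprod scal N N (ctrans S) R S)"
    by (rule d_le[OF m Cm Q])
  also have "\<dots> = nrm m m (mprod scal N N (ctrans S) (M + R) S)" by (simp add: mprod_add)
  also have "\<dots> \<le> cnorm m N (ctrans S) * nrm N N (M + R) * cnorm N m S"
    by (rule nrm_mprod[OF m N N m St mats_add_pos[OF N M R] Sm])
  also have "\<dots> \<le> 1 * nrm N N (M + R) * 1"
    using nrm_add_pos_nonneg[OF N M R] c1 c2 cnorm_nonneg[of m N "ctrans S"] cnorm_nonneg[of N m S]
    by (intro mult_mono mult_mono) auto
  finally show ?thesis by (simp add: S_def)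
qed

lemma dsum_mats: "(A::'v mat) \<in> mats n n \<Longrightarrow> B \<in> mats k k \<Longrightarrow> dsum n n A B \<in> mats (n + k) (n + k)"
  by (auto simp: mats_def dsum_def)

lemma dsum_add: "dsum n n ((A::'v mat) + P) (B + Q) = dsum n n A B + dsum n n P Q"
  by (auto simp: dsum_def fun_eq_iff)

lemma d_dsum:
  assumes n: "0 < n" and k: "0 < k" and A: "(A::'v mat) \<in> mats n n" and B: "B \<in> mats k k"
  shows "d (n + k) (dsum n n A B) = max (d n A) (d k B)"
proof (rule antisym)
  have nk: "0 < n + k" using n by simp
  have D: "dsum n n A B \<in> mats (n + k) (n + k)" by (rule dsum_mats[OF A B])
  show "d (n + k) (dsum n n A B) \<le> max (d n A) (d k B)"
  proof (rule ccontr)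
    assume "\<not> ?thesis"
    hence lt: "d n A < d (n + k) (dsum n n A B)" "d k B < d (n + k) (dsum n n A B)" by auto
    obtain P where P: "P \<in> pos n" "nrm n n (A + P) < d n A + (d (n + k) (dsum n n A B) - d n A)"
      using d_approx[OF n A, of "d (n + k) (dsum n n A B) - d n A"] lt by auto
    obtain Q where Q: "Q \<in> pos k" "nrm k k (B + Q) < d k B + (d (n + k) (dsum n n A B) - d k B)"
      using d_approx[OF k B, of "d (n + k) (dsum n n A B) - d k B"] lt by auto
    have "d (n + k) (dsum n n A B) \<le> nrm (n + k) (n + k) (dsum n n A B + dsum n n P Q)"
      by (rule d_le[OF nk D pos_dsum[OF n k P(1) Q(1)]])
    also have "\<dots> = nrm (n + k) (n + k) (dsum n n (A + P) (B + Q))" by (simp add: dsum_add)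
    also have "\<dots> = max (nrm n n (A + P)) (nrm k k (B + Q))"
      by (rule nrm_dsum[OF n n k k mats_add_pos[OF n A P(1)] mats_add_pos[OF k B Q(1)]])
    finally show False using P Q by linarith
  qed
  show "max (d n A) (d k B) \<le> d (n + k) (dsum n n A B)"
  proof (rule d_ge[OF nk])
    fix R assume R: "R \<in> pos (n + k)"
    have eA: "mprod scal (n + k) (n + k) (ctrans (sel n (\<lambda>i. i))) (dsum n n A B) (sel n (\<lambda>i. i)) = A"
      using A by (subst mprod_sel) (auto simp: dsum_def mats_def fun_eq_iff)
    have eB: "mprod scal (n + k) (n + k) (ctrans (sel k (\<lambda>i. i + n))) (dsum n n A B) (sel k (\<lambda>i. i + n)) = B"
      using B by (subst mprod_sel) (auto simp: dsum_def mats_def fun_eq_iff)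
    have "d n A \<le> nrm (n + k) (n + k) (dsum n n A B + R)"
      using compress[OF n nk _ _ D R, of "\<lambda>i. i"] by (simp add: eA)
    moreover have "d k B \<le> nrm (n + k) (n + k) (dsum n n A B + R)"
      using compress[OF k nk _ _ D R, of "\<lambda>i. i + n"] by (simp add: eB inj_on_def)
    ultimately show "max (d n A) (d k B) \<le> nrm (n + k) (n + k) (dsum n n A B + R)" by simp
  qed
qed

lemma main: "Linf_MOS scal star (d_V nrm pos)"
  unfolding Linf_MOS_def
proof (intro conjI allI impI)
  show "star_vector_space scal star" by (rule svs)
next
  fix n :: nat assume n: "0 < n"
  show "proper_gauge scal (sa star n) (d n)"
    unfolding proper_gauge_def
  proof (intro conjI ballI allI impI)
    fix x assume "x \<in> sa star n" hence x: "x \<in> mats n n" by (simp add: sa_def)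
    show "0 \<le> d n x" by (rule d_nonneg[OF n x])
    fix t :: real assume "0 < t"
    thus "d n (mscal scal (complex_of_real t) x) = t * d n x" by (rule d_scal[OF n x])
  next
    fix x y assume "x \<in> sa star n" "y \<in> sa star n"
    thus "d n (x + y) \<le> d n x + d n y" by (intro d_subadd[OF n]) (auto simp: sa_def)
  next
    fix x assume "x \<in> sa star n" "d n x = 0 \<and> d n (- x) = 0"
    thus "x = 0" by (intro d_proper[OF n]) (auto simp: sa_def)
  qed
next
  fix n k :: nat and X :: "complex mat" and A assume "0 < n \<and> 0 < k \<and> X \<in> mats n k \<and> A \<in> sa star n"
  thus "d k (mprod scal n n (ctrans X) A X) \<le> (cnorm n k X)\<^sup>2 * d n A"
    by (intro d_conj) (auto simp: sa_def)
next
  fix n k A B assume "0 < n \<and> 0 < k \<and> A \<in> sa star n \<and> B \<in> sa star k"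
  thus "d (n + k) (dsum n n A B) = max (d n A) (d k B)"
    by (intro d_dsum) (auto simp: sa_def)
qed

end

theorem proposition3p5:
  fixes scal :: "complex \<Rightarrow> 'v::ab_group_add \<Rightarrow> 'v"
    and star :: "'v \<Rightarrow> 'v"
    and nrm :: "nat \<Rightarrow> nat \<Rightarrow> 'v mat \<Rightarrow> real"
    and pos :: "nat \<Rightarrow> 'v mat set"
  assumes "normal_mo_star_opsp scal star nrm pos"
  shows "Linf_MOS scal star (d_V nrm pos)"
proof -
  interpret NM scal star nrm pos by (rule NM.intro) (rule assms)
  show ?thesis by (rule main)
qed

end
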